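(* Let $X$, $Y$ be disjoint sets of cardinality at least two, and suppose $M\le\mathrm{Sym}(X)$ and $N\le\mathrm{Sym}(Y)$ are transitive. If, in their respective permutation topologies, $M$ is compactly generated and every point stabiliser in $M$ is compact, and $N$ is compact, then $M\boxtimes N$ is compactly generated and every point stabiliser in $M\boxtimes N$ is compact (in the permutation topology of $\mathrm{Sym}(V_Y)$).
   Context: For a set $V$, the permutation topology on $\mathrm{Sym}(V)$ is the topology of pointwise convergence (pointwise stabilisers of finite subsets form a basis of identity neighbourhoods). Let $T$ be the $(|X|,|Y|)$-biregular tree with natural bipartition $VT=V_X\sqcup V_Y$ (vertices in $V_X$ have valency $|X|$, in $V_Y$ valency $|Y|$). $A(v)$, $\overline{A}(v)$ are the sets of arcs (ordered pairs of adjacent vertices) with origin, resp. terminus, $v$. A legal colouring is a map $c:AT\to X\cup Y$ restricting to a bijection $A(v)\to X$ for $v\in V_X$, to a bijection $A(v)\to Y$ for $v\in V_Y$, and constant on each $\overline{A}(v)$. $U_c(M,N)$ is the group of $g\in\mathrm{Aut}(T)$ with $gV_X=V_X$ and $c|_{A(gv)}\circ g|_{A(v)}\circ(c|_{A(v)})^{-1}$ in $M$ for $v\in V_X$ and in $N$ for $v\in V_Y$. The box product $M\boxtimes N\le\mathrm{Sym}(V_Y)$ is the group induced on $V_Y$ by $U_c(M,N)$. *)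

theory Defs
  imports "HOL-Analysis.Analysis" "HOL-Combinatorics.Permutations"
begin

definition Sym :: "'a set \<Rightarrow> ('a \<Rightarrow> 'a) set" where
  "Sym V = {p. p permutes V}"

definition perm_subgroup :: "'a set \<Rightarrow> ('a \<Rightarrow> 'a) set \<Rightarrow> bool" where
  "perm_subgroup V G \<longleftrightarrow> G \<subseteq> Sym V \<and> id \<in> G
     \<and> (\<forall>p\<in>G. \<forall>q\<in>G. p \<circ> q \<in> G) \<and> (\<forall>p\<in>G. inv p \<in> G)"

definition transitive_on :: "'a set \<Rightarrow> ('a \<Rightarrow> 'a) set \<Rightarrow> bool" where
  "transitive_on V G \<longleftrightarrow> (\<forall>x\<in>V. \<forall>y\<in>V. \<exists>p\<in>G. p x = y)"

definition point_stabiliser :: "('a \<Rightarrow> 'a) set \<Rightarrow> 'a \<Rightarrow> ('a \<Rightarrow> 'a) set" where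
  "point_stabiliser G x = {p \<in> G. p x = x}"

text \<open>Topology of pointwise convergence on Sym(V): a set U is open iff for every
  p in U there is a finite F \<subseteq> V such that all q in Sym(V) agreeing with p on F lie in U
  (i.e. the cosets of pointwise stabilisers of finite sets form a basis).\<close>

definition perm_topology :: "'a set \<Rightarrow> ('a \<Rightarrow> 'a) topology" where
  "perm_topology V = topology (\<lambda>U. U \<subseteq> Sym V \<and>
     (\<forall>p\<in>U. \<exists>F. finite F \<and> F \<subseteq> V \<and> {q \<in> Sym V. \<forall>x\<in>F. q x = p x} \<subseteq> U))"


lemma istopology_perm_topology:
  "istopology (\<lambda>U. U \<subseteq> Sym V \<and>
     (\<forall>p\<in>U. \<exists>F. finite F \<and> F \<subseteq> V \<and> {q \<in> Sym V. \<forall>x\<in>F. q x = p x} \<subseteq> U))"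
  unfolding istopology_def
proof (rule conjI; intro allI impI)
  fix S T :: "('a \<Rightarrow> 'a) set"
  assume S: "S \<subseteq> Sym V \<and> (\<forall>p\<in>S. \<exists>F. finite F \<and> F \<subseteq> V \<and> {q \<in> Sym V. \<forall>x\<in>F. q x = p x} \<subseteq> S)"
    and T: "T \<subseteq> Sym V \<and> (\<forall>p\<in>T. \<exists>F. finite F \<and> F \<subseteq> V \<and> {q \<in> Sym V. \<forall>x\<in>F. q x = p x} \<subseteq> T)"
  show "S \<inter> T \<subseteq> Sym V \<and> (\<forall>p\<in>S \<inter> T. \<exists>F. finite F \<and> F \<subseteq> V \<and> {q \<in> Sym V. \<forall>x\<in>F. q x = p x} \<subseteq> S \<inter> T)"
  proof (intro conjI ballI)
    show "S \<inter> T \<subseteq> Sym V" using S by blast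
    fix p assume "p \<in> S \<inter> T"
    then obtain F G where "finite F" "F \<subseteq> V" "{q \<in> Sym V. \<forall>x\<in>F. q x = p x} \<subseteq> S"
      "finite G" "G \<subseteq> V" "{q \<in> Sym V. \<forall>x\<in>G. q x = p x} \<subseteq> T" using S T by blast
    then show "\<exists>F. finite F \<and> F \<subseteq> V \<and> {q \<in> Sym V. \<forall>x\<in>F. q x = p x} \<subseteq> S \<inter> T"
      by (intro exI[of _ "F \<union> G"]) blast
  qed
next
  fix K :: "('a \<Rightarrow> 'a) set set"
  assume "\<forall>S\<in>K. S \<subseteq> Sym V \<and> (\<forall>p\<in>S. \<exists>F. finite F \<and> F \<subseteq> V \<and> {q \<in> Sym V. \<forall>x\<in>F. q x = p x} \<subseteq> S)" (is "?A")
  note * = this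
  show "\<Union>K \<subseteq> Sym V \<and> (\<forall>p\<in>\<Union>K. \<exists>F. finite F \<and> F \<subseteq> V \<and> {q \<in> Sym V. \<forall>x\<in>F. q x = p x} \<subseteq> \<Union>K)"
  proof (intro conjI ballI)
    show "\<Union>K \<subseteq> Sym V" using * by blast
    fix p assume "p \<in> \<Union>K"
    then obtain S where "S \<in> K" "p \<in> S" by blast
    from conjunct2[OF bspec[OF * \<open>S \<in> K\<close>]] \<open>p \<in> S\<close> obtain F where "finite F" "F \<subseteq> V" "{q \<in> Sym V. \<forall>x\<in>F. q x = p x} \<subseteq> S" by blast
    with \<open>S \<in> K\<close> show "\<exists>F. finite F \<and> F \<subseteq> V \<and> {q \<in> Sym V. \<forall>x\<in>F. q x = p x} \<subseteq> \<Union>K" by blast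
  qed
qed

definition generated_perm_group :: "'a set \<Rightarrow> ('a \<Rightarrow> 'a) set \<Rightarrow> ('a \<Rightarrow> 'a) set" where
  "generated_perm_group V K = \<Inter>{H. perm_subgroup V H \<and> K \<subseteq> H}"

definition compactly_generated :: "'a set \<Rightarrow> ('a \<Rightarrow> 'a) set \<Rightarrow> bool" where
  "compactly_generated V G \<longleftrightarrow>
     (\<exists>K. K \<subseteq> G \<and> compactin (perm_topology V) K \<and> generated_perm_group V K = G)"

definition is_tree :: "('v \<Rightarrow> 'v \<Rightarrow> bool) \<Rightarrow> bool" where
  "is_tree E \<longleftrightarrow> (\<forall>u w. E u w \<longrightarrow> E w u) \<and> (\<forall>u. \<not> E u u)
     \<and> (\<forall>u w. E\<^sup>*\<^sup>* u w)
     \<and> \<not> (\<exists>xs. length xs \<ge> 3 \<and> distinct xs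
            \<and> (\<forall>i. Suc i < length xs \<longrightarrow> E (xs ! i) (xs ! Suc i))
            \<and> E (last xs) (hd xs))"

definition biregular_tree ::
  "('v \<Rightarrow> 'v \<Rightarrow> bool) \<Rightarrow> 'v set \<Rightarrow> 'v set \<Rightarrow> 'c set \<Rightarrow> 'c set \<Rightarrow> bool" where
  "biregular_tree E VX VY X Y \<longleftrightarrow> is_tree E
     \<and> VX \<inter> VY = {} \<and> VX \<union> VY = UNIV
     \<and> (\<forall>u w. E u w \<longrightarrow> (u \<in> VX \<longleftrightarrow> w \<in> VY))
     \<and> (\<forall>v\<in>VX. \<exists>f. bij_betw f {w. E v w} X)
     \<and> (\<forall>v\<in>VY. \<exists>f. bij_betw f {w. E v w} Y)"

definition legal_colouring ::
  "('v \<Rightarrow> 'v \<Rightarrow> bool) \<Rightarrow> 'v set \<Rightarrow> 'v set \<Rightarrow> 'c set \<Rightarrow> 'c set \<Rightarrow> ('v \<times> 'v \<Rightarrow> 'c) \<Rightarrow> bool" where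
  "legal_colouring E VX VY X Y c \<longleftrightarrow>
     (\<forall>v\<in>VX. bij_betw (\<lambda>w. c (v, w)) {w. E v w} X)
     \<and> (\<forall>v\<in>VY. bij_betw (\<lambda>w. c (v, w)) {w. E v w} Y)
     \<and> (\<forall>v u u'. E u v \<longrightarrow> E u' v \<longrightarrow> c (u, v) = c (u', v))"

definition tree_aut :: "('v \<Rightarrow> 'v \<Rightarrow> bool) \<Rightarrow> ('v \<Rightarrow> 'v) set" where
  "tree_aut E = {g. bij g \<and> (\<forall>u w. E u w \<longleftrightarrow> E (g u) (g w))}"

text \<open>The local action c|A(gv) o g|A(v) o (c|A(v))^-1 lies in the group L: written out,
  some sigma in L sends the colour c(v,w) to c(gv,gw) for every neighbour w of v.\<close>

definition local_action_in ::
  "('v \<Rightarrow> 'v \<Rightarrow> bool) \<Rightarrow> ('v \<times> 'v \<Rightarrow> 'c) \<Rightarrow> ('c \<Rightarrow> 'c) set \<Rightarrow> ('v \<Rightarrow> 'v) \<Rightarrow> 'v \<Rightarrow> bool" where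
  "local_action_in E c L g v \<longleftrightarrow>
     (\<exists>\<sigma>\<in>L. \<forall>w. E v w \<longrightarrow> c (g v, g w) = \<sigma> (c (v, w)))"

definition U_c ::
  "('v \<Rightarrow> 'v \<Rightarrow> bool) \<Rightarrow> 'v set \<Rightarrow> 'v set \<Rightarrow> ('v \<times> 'v \<Rightarrow> 'c)
    \<Rightarrow> ('c \<Rightarrow> 'c) set \<Rightarrow> ('c \<Rightarrow> 'c) set \<Rightarrow> ('v \<Rightarrow> 'v) set" where
  "U_c E VX VY c M N = {g \<in> tree_aut E. g ` VX = VX
      \<and> (\<forall>v\<in>VX. local_action_in E c M g v) \<and> (\<forall>v\<in>VY. local_action_in E c N g v)}"

definition box_product ::
  "('v \<Rightarrow> 'v \<Rightarrow> bool) \<Rightarrow> 'v set \<Rightarrow> 'v set \<Rightarrow> ('v \<times> 'v \<Rightarrow> 'c)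
    \<Rightarrow> ('c \<Rightarrow> 'c) set \<Rightarrow> ('c \<Rightarrow> 'c) set \<Rightarrow> ('v \<Rightarrow> 'v) set" where
  "box_product E VX VY c M N =
     (\<lambda>g. \<lambda>v. if v \<in> VY then g v else v) ` U_c E VX VY c M N"

end

theory Submission
  imports Defs
begin

lemma openin_perm_topology:
  "openin (perm_topology V) U \<longleftrightarrow> U \<subseteq> Sym V \<and>
     (\<forall>p\<in>U. \<exists>F. finite F \<and> F \<subseteq> V \<and> {q \<in> Sym V. \<forall>x\<in>F. q x = p x} \<subseteq> U)"
  unfolding perm_topology_def by (subst topology_inverse'[OF istopology_perm_topology]) simp

lemma topspace_perm_topology [simp]: "topspace (perm_topology V) = Sym V"
proof -
  have "openin (perm_topology V) (Sym V)"
    unfolding openin_perm_topology by (auto intro!: exI[of _ "{}"])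
  then have "Sym V \<subseteq> topspace (perm_topology V)" by (rule openin_subset)
  moreover have "topspace (perm_topology V) \<subseteq> Sym V"
    unfolding topspace_def using openin_perm_topology by blast
  ultimately show ?thesis by blast
qed

lemma Sym_fix: "q \<in> Sym V \<Longrightarrow> x \<notin> V \<Longrightarrow> q x = x"
  unfolding Sym_def by (simp add: permutes_not_in)

lemma openin_perm_eval: "openin (perm_topology V) {q \<in> Sym V. q x = a}"
  unfolding openin_perm_topology
proof (intro conjI ballI)
  fix p assume p: "p \<in> {q \<in> Sym V. q x = a}"
  show "\<exists>F. finite F \<and> F \<subseteq> V \<and> {q \<in> Sym V. \<forall>x\<in>F. q x = p x} \<subseteq> {q \<in> Sym V. q x = a}"
  proof (cases "x \<in> V")
    case True then show ?thesis using p by (intro exI[of _ "{x}"]) auto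
  next
    case False then show ?thesis using p by (intro exI[of _ "{}"]) (auto simp: Sym_fix)
  qed
qed auto

lemma perm_subgroup_Sym: "perm_subgroup V (Sym V)"
  unfolding perm_subgroup_def Sym_def
  by (auto intro: permutes_compose permutes_inv)

lemma gen_least: "perm_subgroup V H \<Longrightarrow> K \<subseteq> H \<Longrightarrow> generated_perm_group V K \<subseteq> H"
  unfolding generated_perm_group_def by blast

lemma gen_sup: "K \<subseteq> generated_perm_group V K"
  unfolding generated_perm_group_def by blast

lemma gen_subgroup:
  assumes "K \<subseteq> Sym V"
  shows "perm_subgroup V (generated_perm_group V K)"
proof -
  let ?F = "{H. perm_subgroup V H \<and> K \<subseteq> H}"
  have S: "Sym V \<in> ?F" using perm_subgroup_Sym assms by blast
  have "perm_subgroup V (\<Inter>?F)"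
    unfolding perm_subgroup_def[of V "\<Inter>?F"]
  proof (intro conjI)
    show "\<Inter>?F \<subseteq> Sym V" using S by blast
    show "id \<in> \<Inter>?F" unfolding perm_subgroup_def by blast
    show "\<forall>p\<in>\<Inter>?F. \<forall>q\<in>\<Inter>?F. p \<circ> q \<in> \<Inter>?F" unfolding perm_subgroup_def by blast
    show "\<forall>p\<in>\<Inter>?F. inv p \<in> \<Inter>?F" unfolding perm_subgroup_def by blast
  qed
  then show ?thesis unfolding generated_perm_group_def .
qed

locale bt =
  fixes E :: "'v \<Rightarrow> 'v \<Rightarrow> bool" and VX VY :: "'v set" and X Y :: "'c set"
    and c :: "'v \<times> 'v \<Rightarrow> 'c" and M N :: "('c \<Rightarrow> 'c) set"
  assumes Xne: "X \<noteq> {}" and Yne: "Y \<noteq> {}"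
    and MG: "perm_subgroup X M" and NG: "perm_subgroup Y N"
    and Mt: "transitive_on X M" and Nt: "transitive_on Y N"
    and tree: "biregular_tree E VX VY X Y"
    and legal: "legal_colouring E VX VY X Y c"
    and Mstab: "\<forall>x\<in>X. compactin (perm_topology X) (point_stabiliser M x)"
    and Ncomp: "compactin (perm_topology Y) N"
begin

lemma Esym: "E u w \<Longrightarrow> E w u"
  using tree unfolding biregular_tree_def is_tree_def by blast

lemma Econn: "E\<^sup>*\<^sup>* u w"
  using tree unfolding biregular_tree_def is_tree_def by blast

lemma Eside: "E u w \<Longrightarrow> u \<in> VX \<longleftrightarrow> w \<in> VY"
  using tree unfolding biregular_tree_def by blast

lemma VXY: "VX \<inter> VY = {}" "VX \<union> VY = UNIV"
  using tree unfolding biregular_tree_def by blast+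

lemma notVX: "v \<notin> VX \<longleftrightarrow> v \<in> VY"
  using VXY by blast

lemma Eside': "E u w \<Longrightarrow> w \<in> VX \<longleftrightarrow> u \<notin> VX"
  using Eside Esym notVX by blast

lemma nocycle: "\<not> (\<exists>xs. length xs \<ge> 3 \<and> distinct xs
            \<and> (\<forall>i. Suc i < length xs \<longrightarrow> E (xs ! i) (xs ! Suc i))
            \<and> E (last xs) (hd xs))"
  using tree unfolding biregular_tree_def is_tree_def by blast

definition col :: "'v \<Rightarrow> 'c set" where "col v = (if v \<in> VX then X else Y)"
definition grp :: "'v \<Rightarrow> ('c \<Rightarrow> 'c) set" where "grp v = (if v \<in> VX then M else N)"

lemma c_bij: "bij_betw (\<lambda>w. c (v, w)) {w. E v w} (col v)"
  using legal notVX unfolding legal_colouring_def col_def by auto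

lemma c_const: "E u v \<Longrightarrow> E u' v \<Longrightarrow> c (u, v) = c (u', v)"
  using legal unfolding legal_colouring_def by blast

lemma col_ne: "col v \<noteq> {}" using Xne Yne by (simp add: col_def)

lemma has_nbr: "\<exists>w. E v w"
proof -
  obtain x where "x \<in> col v" using col_ne by blast
  then show ?thesis using c_bij[of v] unfolding bij_betw_def by auto
qed

lemma has_in_nbr: "\<exists>p. E p w" using has_nbr Esym by blast

definition kap :: "'v \<Rightarrow> 'c" where "kap w = c (SOME p. E p w, w)"

lemma kap: "E p w \<Longrightarrow> c (p, w) = kap w"
  unfolding kap_def by (metis (mono_tags) c_const someI_ex)

lemma kap_bij: "bij_betw kap {w. E v w} (col v)"
  using c_bij[of v] by (rule bij_betw_cong[THEN iffD1, rotated]) (simp add: kap)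

lemma kap_col: "E v w \<Longrightarrow> kap w \<in> col v"
  using kap_bij[of v] unfolding bij_betw_def by auto

lemma kap_inj: "E v w \<Longrightarrow> E v w' \<Longrightarrow> kap w = kap w' \<Longrightarrow> w = w'"
  using kap_bij[of v] unfolding bij_betw_def inj_on_def by auto

lemma kap_surj: "x \<in> col v \<Longrightarrow> \<exists>w. E v w \<and> kap w = x"
  using kap_bij[of v] unfolding bij_betw_def by (metis (full_types) imageE mem_Collect_eq)

definition nbr :: "'v \<Rightarrow> 'c \<Rightarrow> 'v" where "nbr q x = (THE w. E q w \<and> kap w = x)"

lemma nbr: "x \<in> col q \<Longrightarrow> E q (nbr q x) \<and> kap (nbr q x) = x"
  unfolding nbr_def by (rule theI') (use kap_surj kap_inj in blast)

lemma nbr_eq: "E q w \<Longrightarrow> nbr q (kap w) = w"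
  using nbr[OF kap_col] kap_inj by blast

lemma col_side: "E u w \<Longrightarrow> col u \<noteq> col w \<or> True" by simp

definition dist :: "'v \<Rightarrow> 'v \<Rightarrow> nat" where "dist b w = (LEAST n. (E ^^ n) b w)"

lemma dist_ex: "(E ^^ dist b w) b w"
  unfolding dist_def using rtranclp_imp_relpowp[OF Econn] by (rule LeastI_ex)

lemma dist_le: "(E ^^ n) b w \<Longrightarrow> dist b w \<le> n"
  unfolding dist_def by (rule Least_le)

lemma dist_0: "dist b w = 0 \<longleftrightarrow> w = b"
proof
  assume "dist b w = 0" then show "w = b" using dist_ex[of b w] by simp
next
  assume "w = b" then show "dist b w = 0" using dist_le[of 0 b w] by simp
qed

lemma dist_self [simp]: "dist b b = 0" using dist_0 by simp

lemma dist_nbr_le: "E w w' \<Longrightarrow> dist b w' \<le> Suc (dist b w)"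
  using dist_le relpowp_Suc_I[OF dist_ex] by blast

lemma relpow_parity: "(E ^^ n) b w \<Longrightarrow> (even n \<longleftrightarrow> (w \<in> VX \<longleftrightarrow> b \<in> VX))"
proof (induction n arbitrary: w)
  case 0 then show ?case by simp
next
  case (Suc n)
  from Suc.prems obtain y where "(E ^^ n) b y" "E y w" by (rule relpowp_Suc_E)
  with Suc.IH[of y] Eside'[of y w] show ?case by auto
qed

lemma dist_parity: "even (dist b w) \<longleftrightarrow> (w \<in> VX \<longleftrightarrow> b \<in> VX)"
  using relpow_parity[OF dist_ex] .

lemma dist_nbr: "E w w' \<Longrightarrow> dist b w' = Suc (dist b w) \<or> dist b w = Suc (dist b w')"
proof -
  assume e: "E w w'"
  have 1: "dist b w' \<le> Suc (dist b w)" "dist b w \<le> Suc (dist b w')"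
    using dist_nbr_le e Esym by blast+
  have "dist b w \<noteq> dist b w'"
    using dist_parity[of b w] dist_parity[of b w'] Eside'[OF e] by auto
  with 1 show ?thesis by linarith
qed

lemma par_ex: "w \<noteq> b \<Longrightarrow> \<exists>p. E p w \<and> Suc (dist b p) = dist b w"
proof -
  assume "w \<noteq> b"
  then obtain n where n: "dist b w = Suc n" using dist_0 not0_implies_Suc by blast
  with dist_ex[of b w] obtain y where y: "(E ^^ n) b y" "E y w"
    by (metis relpowp_Suc_E)
  have "dist b y \<le> n" using dist_le[OF y(1)] .
  moreover have "dist b w \<le> Suc (dist b y)" using dist_nbr_le[OF y(2)] .
  ultimately show ?thesis using n y(2) by (intro exI[of _ y]) auto
qed

definition par :: "'v \<Rightarrow> 'v \<Rightarrow> 'v" where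
  "par b w = (SOME p. E p w \<and> Suc (dist b p) = dist b w)"

lemma par: "w \<noteq> b \<Longrightarrow> E (par b w) w \<and> Suc (dist b (par b w)) = dist b w"
  unfolding par_def by (rule someI_ex) (rule par_ex)

lemma same_dist_path:
  "p \<noteq> q \<Longrightarrow> dist b p = d \<Longrightarrow> dist b q = d \<Longrightarrow>
   \<exists>xs. distinct xs \<and> successively E xs \<and> xs \<noteq> [] \<and> hd xs = p \<and> last xs = q
      \<and> length xs \<ge> 3 \<and> (\<forall>x\<in>set xs. dist b x \<le> d)"
proof (induction d arbitrary: p q)
  case 0 then show ?case using dist_0 by auto
next
  case (Suc d)
  have pb: "p \<noteq> b" "q \<noteq> b" using Suc.prems dist_0 by auto
  define p' where "p' = par b p"
  define q' where "q' = par b q"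
  have pp: "E p' p" "dist b p' = d" using par[OF pb(1)] Suc.prems unfolding p'_def by auto
  have qq: "E q' q" "dist b q' = d" using par[OF pb(2)] Suc.prems unfolding q'_def by auto
  show ?case
  proof (cases "p' = q'")
    case True
    show ?thesis
      using True pp qq Suc.prems Esym
      by (intro exI[of _ "[p, p', q]"]) auto
  next
    case False
    from Suc.IH[OF False pp(2) qq(2)] obtain xs where xs: "distinct xs" "successively E xs"
      "xs \<noteq> []" "hd xs = p'" "last xs = q'" "length xs \<ge> 3" "\<forall>x\<in>set xs. dist b x \<le> d"
      by blast
    have "p \<notin> set xs" "q \<notin> set xs" using xs(7) Suc.prems by fastforce+
    then show ?thesis using xs Suc.prems pp qq Esym
      by (intro exI[of _ "p # xs @ [q]"])
         (auto simp: successively_append_iff successively_Cons)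
  qed
qed

lemma par_unique:
  assumes "E p w" "E q w" "Suc (dist b p) = dist b w" "Suc (dist b q) = dist b w"
  shows "p = q"
proof (rule ccontr)
  assume pq: "p \<noteq> q"
  from same_dist_path[OF pq, of b "dist b p"] assms obtain xs where xs:
    "distinct xs" "successively E xs" "xs \<noteq> []" "hd xs = p" "last xs = q"
    "length xs \<ge> 3" "\<forall>x\<in>set xs. dist b x \<le> dist b p" by auto
  have "w \<notin> set xs" using xs(7) assms(3) by fastforce
  then have "length (w # xs) \<ge> 3 \<and> distinct (w # xs)
            \<and> (\<forall>i. Suc i < length (w # xs) \<longrightarrow> E ((w # xs) ! i) ((w # xs) ! Suc i))
            \<and> E (last (w # xs)) (hd (w # xs))"
    using xs assms Esym successively_nth[of E "w # xs"]
    by (auto simp: successively_Cons)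
  then show False using nocycle by blast
qed

lemma par_eqI: "E p w \<Longrightarrow> Suc (dist b p) = dist b w \<Longrightarrow> par b w = p"
  using par_unique par dist_0 by (metis Zero_not_Suc)

lemma nbr_cases: "E q q' \<Longrightarrow> (q' \<noteq> b \<and> par b q' = q) \<or> (q \<noteq> b \<and> par b q = q')"
proof -
  assume e: "E q q'"
  show ?thesis
  proof (cases "dist b q' = Suc (dist b q)")
    case True
    then have "q' \<noteq> b" using dist_0 by auto
    then show ?thesis using par_eqI[OF e] True by auto
  next
    case False
    then have "dist b q = Suc (dist b q')" using dist_nbr[OF e] by auto
    then show ?thesis using par_eqI[OF Esym[OF e]] dist_0 by auto
  qed
qed


lemma grp_sub: "perm_subgroup (col v) (grp v)"
  using MG NG by (simp add: col_def grp_def)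

lemma grp_perm: "\<sigma> \<in> grp v \<Longrightarrow> \<sigma> permutes col v"
  using grp_sub unfolding perm_subgroup_def Sym_def by blast

lemma grp_comp: "\<sigma> \<in> grp v \<Longrightarrow> \<tau> \<in> grp v \<Longrightarrow> \<sigma> \<circ> \<tau> \<in> grp v"
  using grp_sub unfolding perm_subgroup_def by blast

lemma grp_inv: "\<sigma> \<in> grp v \<Longrightarrow> inv \<sigma> \<in> grp v"
  using grp_sub unfolding perm_subgroup_def by blast

lemma grp_id: "id \<in> grp v"
  using grp_sub unfolding perm_subgroup_def by blast

lemma grp_trans: "x \<in> col v \<Longrightarrow> y \<in> col v \<Longrightarrow> \<exists>\<sigma>\<in>grp v. \<sigma> x = y"
  using Mt Nt unfolding transitive_on_def col_def grp_def by auto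

lemma grp_mem: "\<sigma> \<in> grp v \<Longrightarrow> x \<in> col v \<Longrightarrow> \<sigma> x \<in> col v"
  proof - assume "\<sigma> \<in> grp v" "x \<in> col v" then show ?thesis using grp_perm[of \<sigma> v] permutes_in_image[of \<sigma> "col v" x] by simp qed

lemma grp_inj: "\<sigma> \<in> grp v \<Longrightarrow> \<sigma> x = \<sigma> y \<Longrightarrow> x = y"
  proof - assume "\<sigma> \<in> grp v" "\<sigma> x = \<sigma> y" then show ?thesis using grp_perm[of \<sigma> v] permutes_inj[of \<sigma> "col v"] by (simp add: inj_eq) qed

lemma grp_surj: "\<sigma> \<in> grp v \<Longrightarrow> y \<in> col v \<Longrightarrow> \<exists>x\<in>col v. \<sigma> x = y"
  proof - assume "\<sigma> \<in> grp v" "y \<in> col v" then show ?thesis using grp_perm[of \<sigma> v] permutes_image[of \<sigma> "col v"] by (metis imageE) qed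

lemma col_nbr: "E u w \<Longrightarrow> col w \<noteq> col u \<or> True" by simp

lemma col_same: "(u \<in> VX \<longleftrightarrow> w \<in> VX) \<Longrightarrow> col u = col w \<and> grp u = grp w"
  by (simp add: col_def grp_def)

definition sch :: "'v \<Rightarrow> 'c \<Rightarrow> 'c \<Rightarrow> ('c \<Rightarrow> 'c)" where
  "sch v x y = (SOME \<sigma>. \<sigma> \<in> grp v \<and> \<sigma> x = y)"

lemma sch: "x \<in> col v \<Longrightarrow> y \<in> col v \<Longrightarrow> sch v x y \<in> grp v \<and> sch v x y x = y"
proof -
  assume "x \<in> col v" "y \<in> col v"
  then have "\<exists>\<sigma>. \<sigma> \<in> grp v \<and> \<sigma> x = y" using grp_trans by blast
  then show ?thesis unfolding sch_def by (rule someI_ex)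
qed

section \<open>Construction of automorphisms\<close>

definition sig :: "'v \<Rightarrow> ('v \<Rightarrow> 'c \<Rightarrow> 'c) \<Rightarrow> ('v \<Rightarrow> 'v) \<Rightarrow> 'v \<Rightarrow> ('c \<Rightarrow> 'c)" where
  "sig b \<rho> h p = (if p = b then \<rho> b else sch p (kap (par b p)) (kap (h (par b p))) \<circ> \<rho> p)"

definition stp :: "'v \<Rightarrow> ('v \<Rightarrow> 'c \<Rightarrow> 'c) \<Rightarrow> ('v \<Rightarrow> 'v) \<Rightarrow> 'v \<Rightarrow> 'v" where
  "stp b \<rho> h w = (if w = b then b else nbr (h (par b w)) (sig b \<rho> h (par b w) (kap w)))"

definition gc :: "'v \<Rightarrow> ('v \<Rightarrow> 'c \<Rightarrow> 'c) \<Rightarrow> 'v \<Rightarrow> 'v" where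
  "gc b \<rho> w = ((stp b \<rho> ^^ dist b w) (\<lambda>_. b)) w"

lemma stp_cong:
  assumes "w \<noteq> b \<Longrightarrow> h (par b w) = h' (par b w)"
    and "w \<noteq> b \<Longrightarrow> par b w \<noteq> b \<Longrightarrow> h (par b (par b w)) = h' (par b (par b w))"
  shows "stp b \<rho> h w = stp b \<rho> h' w"
  using assms unfolding stp_def sig_def by auto

lemma dist_par: "w \<noteq> b \<Longrightarrow> dist b (par b w) < dist b w"
  using par by fastforce

lemma stp_stable: "dist b w \<le> n \<Longrightarrow> (stp b \<rho> ^^ Suc n) (\<lambda>_. b) w = (stp b \<rho> ^^ n) (\<lambda>_. b) w"
proof (induction n arbitrary: w)
  case 0 then show ?case by (simp add: dist_0 stp_def)
next
  case (Suc n)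
  show ?case
  proof (cases "w = b")
    case True then show ?thesis by (simp add: stp_def)
  next
    case False
    have 1: "dist b (par b w) \<le> n" using par[OF False] Suc.prems by auto
    have 2: "dist b (par b (par b w)) \<le> n" if "par b w \<noteq> b"
      using dist_par[OF that] 1 by auto
    have "(stp b \<rho> ^^ Suc (Suc n)) (\<lambda>_. b) w = stp b \<rho> ((stp b \<rho> ^^ Suc n) (\<lambda>_. b)) w"
      by simp
    also have "\<dots> = stp b \<rho> ((stp b \<rho> ^^ n) (\<lambda>_. b)) w"
      by (rule stp_cong) (use Suc.IH[OF 1] Suc.IH[OF 2] in auto)
    also have "\<dots> = (stp b \<rho> ^^ Suc n) (\<lambda>_. b) w"
      by simp
    finally show ?thesis .
  qed
qed

lemma stp_gc: "dist b w \<le> n \<Longrightarrow> (stp b \<rho> ^^ n) (\<lambda>_. b) w = gc b \<rho> w"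
proof (induction n)
  case 0 then show ?case by (simp add: gc_def)
next
  case (Suc n)
  show ?case
  proof (cases "dist b w = Suc n")
    case True then show ?thesis by (simp add: gc_def)
  next
    case False
    then have "dist b w \<le> n" using Suc.prems by auto
    then show ?thesis using stp_stable Suc.IH by metis
  qed
qed

lemma gc_b [simp]: "gc b \<rho> b = b"
  by (simp add: gc_def)

lemma gc_rec: "w \<noteq> b \<Longrightarrow> gc b \<rho> w = stp b \<rho> (gc b \<rho>) w"
proof -
  assume wb: "w \<noteq> b"
  then obtain m where m: "dist b w = Suc m" using dist_0 not0_implies_Suc by blast
  have 1: "dist b (par b w) \<le> m" using par[OF wb] m by auto
  have 2: "dist b (par b (par b w)) \<le> m" if "par b w \<noteq> b"
    using dist_par[OF that] 1 by auto
  have "gc b \<rho> w = stp b \<rho> ((stp b \<rho> ^^ m) (\<lambda>_. b)) w"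
    by (simp add: gc_def m)
  also have "\<dots> = stp b \<rho> (gc b \<rho>) w"
    by (rule stp_cong) (use stp_gc 1 2 in auto)
  finally show ?thesis .
qed

definition good :: "'v \<Rightarrow> ('c \<Rightarrow> 'c) set \<Rightarrow> ('v \<Rightarrow> 'c \<Rightarrow> 'c) \<Rightarrow> bool" where
  "good b C \<rho> \<longleftrightarrow> \<rho> b \<in> C \<and> (\<forall>p. p \<noteq> b \<longrightarrow> \<rho> p \<in> grp p \<and> \<rho> p (kap (par b p)) = kap (par b p))"


context
  fixes b :: 'v and C :: "('c \<Rightarrow> 'c) set" and \<rho> :: "'v \<Rightarrow> 'c \<Rightarrow> 'c"
  assumes Cg: "C \<subseteq> grp b" and gd: "good b C \<rho>"
begin

lemma gc_step: "w \<noteq> b \<Longrightarrow> gc b \<rho> w = nbr (gc b \<rho> (par b w)) (sig b \<rho> (gc b \<rho>) (par b w) (kap w))"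
  using gc_rec by (simp add: stp_def)

lemma sig_b: "sig b \<rho> h b = \<rho> b" by (simp add: sig_def)

definition inv_P :: "'v \<Rightarrow> bool" where
  "inv_P w \<longleftrightarrow> (gc b \<rho> w \<in> VX \<longleftrightarrow> w \<in> VX) \<and> (w \<noteq> b \<longrightarrow>
      E (gc b \<rho> (par b w)) (gc b \<rho> w) \<and> kap (gc b \<rho> w) = sig b \<rho> (gc b \<rho>) (par b w) (kap w)
      \<and> gc b \<rho> w \<noteq> b \<and> par b (gc b \<rho> w) = gc b \<rho> (par b w) \<and> dist b (gc b \<rho> w) = dist b w)"

lemma sig_grp:
  assumes "inv_P p"
  shows "sig b \<rho> (gc b \<rho>) p \<in> grp p \<and>
    (p \<noteq> b \<longrightarrow> sig b \<rho> (gc b \<rho>) p (kap (par b p)) = kap (gc b \<rho> (par b p)))"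
proof (cases "p = b")
  case True then show ?thesis using gd Cg by (auto simp: sig_def good_def)
next
  case False
  have e: "E (gc b \<rho> p) (gc b \<rho> (par b p))" using assms False Esym unfolding inv_P_def by blast
  have cs: "col (gc b \<rho> p) = col p" using assms col_same unfolding inv_P_def by blast
  have k1: "kap (par b p) \<in> col p" using kap_col[OF Esym] par[OF False] by blast
  have k2: "kap (gc b \<rho> (par b p)) \<in> col p" using kap_col[OF e] cs by simp
  have r: "\<rho> p \<in> grp p" "\<rho> p (kap (par b p)) = kap (par b p)" using gd False by (auto simp: good_def)
  show ?thesis using sch[OF k1 k2] r False grp_comp by (simp add: sig_def)
qed

lemma inv_P_all: "inv_P w"
proof (induction "dist b w" arbitrary: w rule: less_induct)
  case less
  show ?case
  proof (cases "w = b")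
    case True then show ?thesis by (simp add: inv_P_def)
  next
    case False
    define p where "p = par b w"
    define g where "g = gc b \<rho>"
    define \<sigma> where "\<sigma> = sig b \<rho> g p"
    have ep: "E p w" "Suc (dist b p) = dist b w" using par[OF False] unfolding p_def by auto
    have Pp: "inv_P p" using less ep by auto
    have sg: "\<sigma> \<in> grp p" "p \<noteq> b \<Longrightarrow> \<sigma> (kap (par b p)) = kap (g (par b p))"
      using sig_grp[OF Pp] unfolding \<sigma>_def g_def by auto
    have cs: "col (g p) = col p" "g p \<in> VX \<longleftrightarrow> p \<in> VX"
      using Pp col_same unfolding inv_P_def g_def by blast+
    have kw: "\<sigma> (kap w) \<in> col (g p)" using grp_mem[OF sg(1) kap_col[OF ep(1)]] cs by simp
    have gw: "g w = nbr (g p) (\<sigma> (kap w))" using gc_step[OF False] unfolding g_def p_def \<sigma>_def by simp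
    have E1: "E (g p) (g w)" and K1: "kap (g w) = \<sigma> (kap w)" using nbr[OF kw] gw by auto
    have side: "g w \<in> VX \<longleftrightarrow> w \<in> VX" using Eside'[OF E1] Eside'[OF ep(1)] cs by auto
    have pg: "g w \<noteq> b \<and> par b (g w) = g p"
    proof -
      { assume a: "g p \<noteq> b" "par b (g p) = g w"
        then have pb: "p \<noteq> b" by (auto simp: g_def)
        then have "par b (g p) = g (par b p)" using Pp unfolding inv_P_def g_def by blast
        with a have "kap (g w) = kap (g (par b p))" by simp
        then have "\<sigma> (kap w) = \<sigma> (kap (par b p))" using K1 sg(2)[OF pb] by simp
        then have "kap w = kap (par b p)" using grp_inj[OF sg(1)] by blast
        then have "w = par b p" using kap_inj[OF ep(1) Esym] par[OF pb] by blast
        then have False using par[OF pb] ep by auto }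
      then show ?thesis using nbr_cases[OF E1] by blast
    qed
    have dg: "dist b (g p) = dist b p"
      using Pp unfolding inv_P_def g_def by (cases "p = b") auto
    have dw: "dist b (g w) = dist b w"
      using par[of "g w" b] pg dg ep by auto
    show ?thesis unfolding inv_P_def
      using False side E1 K1 pg dw unfolding g_def p_def \<sigma>_def by simp
  qed
qed

lemma gc_local: "E p w \<Longrightarrow> E (gc b \<rho> p) (gc b \<rho> w) \<and> kap (gc b \<rho> w) = sig b \<rho> (gc b \<rho>) p (kap w)"
proof -
  assume e: "E p w"
  show ?thesis
  proof (cases "w \<noteq> b \<and> par b w = p")
    case True then show ?thesis using inv_P_all[of w] unfolding inv_P_def by auto
  next
    case False
    then have pb: "p \<noteq> b" "par b p = w" using nbr_cases[OF e] by auto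
    then show ?thesis using inv_P_all[of p] sig_grp[OF inv_P_all[of p]] Esym unfolding inv_P_def by auto
  qed
qed

lemma gc_side: "gc b \<rho> w \<in> VX \<longleftrightarrow> w \<in> VX"
  using inv_P_all unfolding inv_P_def by blast

lemma gc_dist: "dist b (gc b \<rho> w) = dist b w"
  using inv_P_all[of w] unfolding inv_P_def by (cases "w = b") auto

lemma gc_par: "w \<noteq> b \<Longrightarrow> par b (gc b \<rho> w) = gc b \<rho> (par b w)"
  using inv_P_all[of w] unfolding inv_P_def by auto

lemma gc_inj: "gc b \<rho> w = gc b \<rho> w' \<Longrightarrow> w = w'"
proof (induction "dist b w" arbitrary: w w' rule: less_induct)
  case less
  have dd: "dist b w = dist b w'" using gc_dist less.prems by metis
  show ?case
  proof (cases "w = b")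
    case True then show ?thesis using dd dist_0 by auto
  next
    case False
    then have w'b: "w' \<noteq> b" using dd dist_0 by auto
    have "gc b \<rho> (par b w) = gc b \<rho> (par b w')"
      using gc_par[OF False] gc_par[OF w'b] less.prems by metis
    then have pp: "par b w = par b w'" using less.hyps dist_par[OF False] by blast
    have "sig b \<rho> (gc b \<rho>) (par b w) (kap w) = sig b \<rho> (gc b \<rho>) (par b w) (kap w')"
      using gc_local[OF conjunct1[OF par[OF False]]] gc_local[OF conjunct1[OF par[OF w'b]]] pp less.prems
      by metis
    then have "kap w = kap w'" using grp_inj sig_grp[OF inv_P_all] by blast
    then show ?thesis using kap_inj par[OF False] par[OF w'b] pp by metis
  qed
qed

lemma gc_nbr_surj: "E (gc b \<rho> x) y \<Longrightarrow> \<exists>w. E x w \<and> gc b \<rho> w = y"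
proof -
  assume e: "E (gc b \<rho> x) y"
  have cs: "col (gc b \<rho> x) = col x" using gc_side col_same by blast
  have "kap y \<in> col x" using kap_col[OF e] cs by simp
  then obtain z where z: "z \<in> col x" "sig b \<rho> (gc b \<rho>) x z = kap y"
    using grp_surj sig_grp[OF inv_P_all] by blast
  define w where "w = nbr x z"
  have w: "E x w" "kap w = z" using nbr[OF z(1)] unfolding w_def by auto
  have "E (gc b \<rho> x) (gc b \<rho> w)" "kap (gc b \<rho> w) = kap y"
    using gc_local[OF w(1)] w z by auto
  then have "gc b \<rho> w = y" using kap_inj e by blast
  then show ?thesis using w by blast
qed

lemma gc_surj: "\<exists>w. gc b \<rho> w = y"
proof (induction "dist b y" arbitrary: y rule: less_induct)
  case less
  show ?case
  proof (cases "y = b")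
    case True then show ?thesis by (intro exI[of _ b]) simp
  next
    case False
    obtain x where x: "gc b \<rho> x = par b y" using less dist_par[OF False] by blast
    have "E (gc b \<rho> x) y" using x par[OF False] by simp
    then show ?thesis using gc_nbr_surj by blast
  qed
qed

lemma gc_bij: "bij (gc b \<rho>)"
  unfolding bij_def inj_def surj_def using gc_inj gc_surj by metis

lemma gc_E: "E u w \<longleftrightarrow> E (gc b \<rho> u) (gc b \<rho> w)"
proof
  assume "E u w" then show "E (gc b \<rho> u) (gc b \<rho> w)" using gc_local by blast
next
  assume "E (gc b \<rho> u) (gc b \<rho> w)"
  then obtain w' where "E u w'" "gc b \<rho> w' = gc b \<rho> w" using gc_nbr_surj by blast
  then show "E u w" using gc_inj by blast
qed

end


abbreviation UU where "UU \<equiv> U_c E VX VY c M N"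

lemma loc_iff: "(\<forall>w. E v w \<longrightarrow> E (g v) (g w)) \<Longrightarrow>
  local_action_in E c L g v \<longleftrightarrow> (\<exists>\<sigma>\<in>L. \<forall>w. E v w \<longrightarrow> kap (g w) = \<sigma> (kap w))"
  unfolding local_action_in_def by (simp add: kap)

lemma UI:
  assumes "bij g" "\<And>u w. E u w \<longleftrightarrow> E (g u) (g w)" "\<And>v. g v \<in> VX \<longleftrightarrow> v \<in> VX"
    "\<And>v. \<exists>\<sigma>\<in>grp v. \<forall>w. E v w \<longrightarrow> kap (g w) = \<sigma> (kap w)"
  shows "g \<in> UU"
proof -
  have im: "g ` VX = VX"
  proof (rule set_eqI)
    fix x
    show "x \<in> g ` VX \<longleftrightarrow> x \<in> VX"
    proof
      assume "x \<in> g ` VX"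
      then obtain y where "y \<in> VX" "x = g y" by blast
      then show "x \<in> VX" using assms(3) by simp
    next
      assume x: "x \<in> VX"
      have "surj g" using assms(1) by (rule bij_is_surj)
      then obtain y where y: "x = g y" by (metis surjD)
      then have "y \<in> VX" using assms(3) x by simp
      then show "x \<in> g ` VX" using y by blast
    qed
  qed
  have loc: "local_action_in E c (grp v) g v" for v
  proof -
    have "\<forall>w. E v w \<longrightarrow> E (g v) (g w)" using assms(2) by blast
    from loc_iff[OF this, of "grp v"] show ?thesis using assms(4)[of v] by blast
  qed
  have ta: "g \<in> tree_aut E" unfolding tree_aut_def using assms(1,2) by blast
  show ?thesis unfolding U_c_def
  proof (intro CollectI conjI ballI ta im)
    fix v assume "v \<in> VX" then show "local_action_in E c M g v" using loc[of v] by (simp add: grp_def)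
  next
    fix v assume "v \<in> VY" then have "v \<notin> VX" using VXY(1) by blast
    then show "local_action_in E c N g v" using loc[of v] by (simp add: grp_def)
  qed
qed

lemma U_bij: "g \<in> UU \<Longrightarrow> bij g"
  unfolding U_c_def tree_aut_def by blast

lemma U_E: "g \<in> UU \<Longrightarrow> E u w \<longleftrightarrow> E (g u) (g w)"
  unfolding U_c_def tree_aut_def by blast

lemma U_side: "g \<in> UU \<Longrightarrow> g v \<in> VX \<longleftrightarrow> v \<in> VX"
proof -
  assume g: "g \<in> UU"
  then have gi: "inj g" and im: "g ` VX = VX" using U_bij unfolding U_c_def bij_def by auto
  show ?thesis
  proof
    assume "g v \<in> VX"
    then obtain u where "u \<in> VX" "g u = g v" using im by (metis imageE)
    then show "v \<in> VX" using gi by (metis injD)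
  qed (use im in auto)
qed

lemma U_grp: "g \<in> UU \<Longrightarrow> grp (g v) = grp v \<and> col (g v) = col v"
  using U_side col_same by blast

lemma U_loc: "g \<in> UU \<Longrightarrow> \<exists>\<sigma>\<in>grp v. \<forall>w. E v w \<longrightarrow> kap (g w) = \<sigma> (kap w)"
proof -
  assume g: "g \<in> UU"
  have "local_action_in E c (grp v) g v"
  proof (cases "v \<in> VX")
    case True then show ?thesis using g unfolding U_c_def grp_def by simp
  next
    case False then have "v \<in> VY" using VXY(2) by blast
    then show ?thesis using g False unfolding U_c_def grp_def by simp
  qed
  then show ?thesis using loc_iff[of v g] U_E[OF g] by blast
qed

lemma U_comp: "g \<in> UU \<Longrightarrow> h \<in> UU \<Longrightarrow> g \<circ> h \<in> UU"
proof (rule UI)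
  assume g: "g \<in> UU" and h: "h \<in> UU"
  show "bij (g \<circ> h)" using U_bij[OF g] U_bij[OF h] by (rule bij_comp[rotated])
  show "E u w \<longleftrightarrow> E ((g \<circ> h) u) ((g \<circ> h) w)" for u w using U_E[OF g] U_E[OF h] by simp
  show "(g \<circ> h) v \<in> VX \<longleftrightarrow> v \<in> VX" for v using U_side[OF g] U_side[OF h] by simp
  show "\<exists>\<sigma>\<in>grp v. \<forall>w. E v w \<longrightarrow> kap ((g \<circ> h) w) = \<sigma> (kap w)" for v
  proof -
    obtain \<sigma> where s: "\<sigma> \<in> grp v" "\<forall>w. E v w \<longrightarrow> kap (h w) = \<sigma> (kap w)" using U_loc[OF h] by blast
    obtain \<tau> where t: "\<tau> \<in> grp (h v)" "\<forall>w. E (h v) w \<longrightarrow> kap (g w) = \<tau> (kap w)" using U_loc[OF g] by blast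
    have "\<tau> \<circ> \<sigma> \<in> grp v" using grp_comp[OF _ s(1)] t(1) U_grp[OF h] by simp
    moreover have "\<forall>w. E v w \<longrightarrow> kap ((g \<circ> h) w) = (\<tau> \<circ> \<sigma>) (kap w)"
      using s t U_E[OF h] by auto
    ultimately show ?thesis by blast
  qed
qed

lemma U_inv: "g \<in> UU \<Longrightarrow> inv g \<in> UU"
proof (rule UI)
  assume g: "g \<in> UU"
  have b: "bij g" using U_bij[OF g] .
  have gi: "g (inv g x) = x" "inv g (g x) = x" for x using b by (auto simp: bij_is_surj surj_f_inv_f bij_is_inj inv_f_f)
  show "bij (inv g)" using b by (rule bij_imp_bij_inv)
  show "E u w \<longleftrightarrow> E (inv g u) (inv g w)" for u w using U_E[OF g, of "inv g u" "inv g w"] gi by simp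
  show "inv g v \<in> VX \<longleftrightarrow> v \<in> VX" for v using U_side[OF g, of "inv g v"] gi by simp
  show "\<exists>\<sigma>\<in>grp v. \<forall>w. E v w \<longrightarrow> kap (inv g w) = \<sigma> (kap w)" for v
  proof -
    obtain \<sigma> where s: "\<sigma> \<in> grp (inv g v)" "\<forall>w. E (inv g v) w \<longrightarrow> kap (g w) = \<sigma> (kap w)"
      using U_loc[OF g] by blast
    have sg: "\<sigma> \<in> grp v" using s(1) U_grp[OF g, of "inv g v"] gi by simp
    have "kap (inv g w) = inv \<sigma> (kap w)" if "E v w" for w
    proof -
      have "E (inv g v) (inv g w)" using that U_E[OF g, of "inv g v" "inv g w"] gi by simp
      then have "kap w = \<sigma> (kap (inv g w))" using s(2) gi by metis
      then show ?thesis using permutes_inverses(2)[OF grp_perm[OF sg]] by simp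
    qed
    then show ?thesis using grp_inv[OF sg] by blast
  qed
qed

lemma U_id: "id \<in> UU"
proof (rule UI)
  show "\<exists>\<sigma>\<in>grp v. \<forall>w. E v w \<longrightarrow> kap (id w) = \<sigma> (kap w)" for v
    by (rule bexI[of _ id]) (simp_all add: grp_id)
qed (simp_all)

lemma gc_U: "C \<subseteq> grp b \<Longrightarrow> good b C \<rho> \<Longrightarrow> gc b \<rho> \<in> UU"
proof -
  assume a: "C \<subseteq> grp b" "good b C \<rho>"
  show ?thesis
  proof (rule UI)
    show "bij (gc b \<rho>)" using gc_bij[OF a] .
    show "E u w \<longleftrightarrow> E (gc b \<rho> u) (gc b \<rho> w)" for u w using gc_E[OF a] .
    show "gc b \<rho> v \<in> VX \<longleftrightarrow> v \<in> VX" for v using gc_side[OF a] .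
    show "\<exists>\<sigma>\<in>grp v. \<forall>w. E v w \<longrightarrow> kap (gc b \<rho> w) = \<sigma> (kap w)" for v
      using sig_grp[OF a inv_P_all[OF a]] gc_local[OF a] by blast
  qed
qed

lemma gc_loc_b: "C \<subseteq> grp b \<Longrightarrow> good b C \<rho> \<Longrightarrow> E b w \<Longrightarrow> kap (gc b \<rho> w) = \<rho> b (kap w)"
proof -
  assume a: "C \<subseteq> grp b" "good b C \<rho>" "E b w"
  show ?thesis using gc_local[OF a(1,2) a(3)] by (simp add: sig_def)
qed


section \<open>Surjectivity of the parametrisation\<close>

definition stabset :: "'v \<Rightarrow> ('c \<Rightarrow> 'c) set \<Rightarrow> ('v \<Rightarrow> 'v) set" where
  "stabset b C = {h \<in> UU. h b = b \<and> (\<exists>\<pi>\<in>C. \<forall>w. E b w \<longrightarrow> kap (h w) = \<pi> (kap w))}"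

lemma gc_stabset: "C \<subseteq> grp b \<Longrightarrow> good b C \<rho> \<Longrightarrow> gc b \<rho> \<in> stabset b C"
proof -
  assume a: "C \<subseteq> grp b" "good b C \<rho>"
  have "\<rho> b \<in> C" using a(2) unfolding good_def by blast
  moreover have "\<forall>w. E b w \<longrightarrow> kap (gc b \<rho> w) = \<rho> b (kap w)" using gc_loc_b[OF a] by blast
  ultimately show ?thesis unfolding stabset_def using gc_U[OF a] by auto
qed

lemma stabset_gc:
  assumes Cg: "C \<subseteq> grp b" and h: "h \<in> stabset b C"
  shows "\<exists>\<rho>. good b C \<rho> \<and> gc b \<rho> = h"
proof -
  from h obtain \<pi> where hU: "h \<in> UU" and hb: "h b = b" and \<pi>: "\<pi> \<in> C" "\<forall>w. E b w \<longrightarrow> kap (h w) = \<pi> (kap w)"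
    unfolding stabset_def by blast
  define lh where "lh p = (SOME \<sigma>. \<sigma> \<in> grp p \<and> (\<forall>w. E p w \<longrightarrow> kap (h w) = \<sigma> (kap w)))" for p
  have lh: "lh p \<in> grp p \<and> (\<forall>w. E p w \<longrightarrow> kap (h w) = lh p (kap w))" for p
  proof -
    have "\<exists>\<sigma>. \<sigma> \<in> grp p \<and> (\<forall>w. E p w \<longrightarrow> kap (h w) = \<sigma> (kap w))"
      using U_loc[OF hU, of p] by blast
    then show ?thesis unfolding lh_def by (rule someI_ex)
  qed
  define s where "s p = sch p (kap (par b p)) (kap (h (par b p)))" for p
  have s: "s p \<in> grp p \<and> s p (kap (par b p)) = kap (h (par b p))" if "p \<noteq> b" for p
  proof -
    have e: "E p (par b p)" using par[OF that] Esym by blast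
    have "E (h p) (h (par b p))" using e U_E[OF hU] by blast
    then have "kap (h (par b p)) \<in> col (h p)" by (rule kap_col)
    then have "kap (h (par b p)) \<in> col p" using U_grp[OF hU, of p] by simp
    then show ?thesis unfolding s_def using sch[OF kap_col[OF e]] by simp
  qed
  define \<rho> where "\<rho> p = (if p = b then \<pi> else inv (s p) \<circ> lh p)" for p
  have good: "good b C \<rho>"
    unfolding good_def
  proof (intro conjI allI impI)
    show "\<rho> b \<in> C" using \<pi> by (simp add: \<rho>_def)
    fix p assume pb: "p \<noteq> b"
    have e: "E p (par b p)" using par[OF pb] Esym by blast
    show "\<rho> p \<in> grp p" using pb grp_comp grp_inv s[OF pb] lh by (simp add: \<rho>_def)
    have "\<rho> p (kap (par b p)) = inv (s p) (kap (h (par b p)))"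
      using pb lh e by (simp add: \<rho>_def)
    also have "\<dots> = kap (par b p)"
    proof -
      have "s p \<in> grp p" using s[OF pb] by blast
      from permutes_inverses(2)[OF grp_perm[OF this], of "kap (par b p)"] show ?thesis using s[OF pb] by simp
    qed
    finally show "\<rho> p (kap (par b p)) = kap (par b p)" .
  qed
  have "gc b \<rho> w = h w" for w
  proof (induction "dist b w" arbitrary: w rule: less_induct)
    case less
    show ?case
    proof (cases "w = b")
      case True then show ?thesis using hb by simp
    next
      case False
      define p where "p = par b w"
      have ep: "E p w" using par[OF False] unfolding p_def by blast
      have IHp: "gc b \<rho> p = h p" using less dist_par[OF False] unfolding p_def by blast
      have ehw: "E (h p) (h w)" using ep U_E[OF hU] by blast
      have sigv: "sig b \<rho> (gc b \<rho>) p (kap w) = kap (h w)"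
      proof (cases "p = b")
        case True then show ?thesis using \<pi> ep by (simp add: sig_def \<rho>_def)
      next
        case pb: False
        have "dist b (par b p) < dist b w" using dist_par[OF pb] dist_par[OF False] unfolding p_def by linarith
        then have IHpp: "gc b \<rho> (par b p) = h (par b p)" using less by blast
        have "sig b \<rho> (gc b \<rho>) p (kap w) = s p (inv (s p) (lh p (kap w)))"
          using pb IHpp by (simp add: sig_def \<rho>_def s_def)
        also have "\<dots> = lh p (kap w)"
        proof -
          have "s p \<in> grp p" using s[OF pb] by blast
          from permutes_inverses(1)[OF grp_perm[OF this]] show ?thesis by simp
        qed
        also have "\<dots> = kap (h w)" using lh ep by simp
        finally show ?thesis .
      qed
      have "gc b \<rho> w = nbr (gc b \<rho> p) (sig b \<rho> (gc b \<rho>) p (kap w))"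
        using gc_rec[OF False] False by (simp add: stp_def p_def)
      also have "\<dots> = h w" using IHp sigv nbr_eq[OF ehw] by simp
      finally show ?thesis .
    qed
  qed
  then show ?thesis using good by blast
qed

lemma stabset_eq: "C \<subseteq> grp b \<Longrightarrow> stabset b C = gc b ` {\<rho>. good b C \<rho>}"
proof -
  assume a: "C \<subseteq> grp b"
  show ?thesis
  proof
    show "stabset b C \<subseteq> gc b ` {\<rho>. good b C \<rho>}"
    proof
      fix h assume "h \<in> stabset b C"
      then obtain \<rho> where "good b C \<rho>" "gc b \<rho> = h" using stabset_gc[OF a] by blast
      then show "h \<in> gc b ` {\<rho>. good b C \<rho>}" by blast
    qed
    show "gc b ` {\<rho>. good b C \<rho>} \<subseteq> stabset b C" using gc_stabset[OF a] by blast
  qed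
qed

section \<open>Dependence on finitely many values\<close>

lemma gc_dep: "\<exists>D. finite D \<and> (\<forall>\<rho>'. (\<forall>(p,x)\<in>D. \<rho>' p x = \<rho> p x) \<longrightarrow> gc b \<rho>' w = gc b \<rho> w)"
proof (induction "dist b w" arbitrary: w rule: less_induct)
  case less
  show ?case
  proof (cases "w = b")
    case True then show ?thesis by (intro exI[of _ "{}"]) simp
  next
    case False
    define p where "p = par b w"
    obtain D1 where D1: "finite D1" "\<forall>\<rho>'. (\<forall>(p,x)\<in>D1. \<rho>' p x = \<rho> p x) \<longrightarrow> gc b \<rho>' p = gc b \<rho> p"
      using less dist_par[OF False] unfolding p_def by blast
    obtain D2 where D2: "finite D2" "p \<noteq> b \<Longrightarrow> \<forall>\<rho>'. (\<forall>(p,x)\<in>D2. \<rho>' p x = \<rho> p x) \<longrightarrow> gc b \<rho>' (par b p) = gc b \<rho> (par b p)"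
    proof (cases "p = b")
      case True then show ?thesis using that[of "{}"] by simp
    next
      case pb: False
      have "dist b (par b p) < dist b w" using dist_par[OF pb] dist_par[OF False] unfolding p_def by linarith
      then show ?thesis using less that by blast
    qed
    show ?thesis
    proof (intro exI[of _ "D1 \<union> D2 \<union> {(p, kap w)}"] conjI allI impI)
      show "finite (D1 \<union> D2 \<union> {(p, kap w)})" using D1 D2 by simp
      fix \<rho>' assume a: "\<forall>(p,x)\<in>D1 \<union> D2 \<union> {(p, kap w)}. \<rho>' p x = \<rho> p x"
      have 1: "gc b \<rho>' p = gc b \<rho> p" using D1 a by blast
      have 2: "p \<noteq> b \<Longrightarrow> gc b \<rho>' (par b p) = gc b \<rho> (par b p)" using D2 a by blast
      have 3: "\<rho>' p (kap w) = \<rho> p (kap w)" using a by blast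
      have "sig b \<rho>' (gc b \<rho>') p (kap w) = sig b \<rho> (gc b \<rho>) p (kap w)"
        using 2 3 by (cases "p = b") (simp_all add: sig_def)
      then show "gc b \<rho>' w = gc b \<rho> w"
        using gc_rec[OF False, of \<rho>] gc_rec[OF False, of \<rho>'] 1 False by (simp add: stp_def p_def)
    qed
  qed
qed


section \<open>Topology: compactness of parametrised sets\<close>

definition rs :: "('v \<Rightarrow> 'v) \<Rightarrow> 'v \<Rightarrow> 'v" where
  "rs g = (\<lambda>v. if v \<in> VY then g v else v)"

definition SS :: "'v \<Rightarrow> ('c \<Rightarrow> 'c) set \<Rightarrow> 'v \<Rightarrow> ('c \<Rightarrow> 'c) set" where
  "SS b C p = (if p = b then C else point_stabiliser (grp p) (kap (par b p)))"

definition TT :: "'v \<Rightarrow> ('c \<Rightarrow> 'c) set \<Rightarrow> 'v \<Rightarrow> ('c \<Rightarrow> 'c) topology" where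
  "TT b C p = subtopology (perm_topology (col p)) (SS b C p)"

definition PP :: "'v \<Rightarrow> ('c \<Rightarrow> 'c) set \<Rightarrow> ('v \<Rightarrow> 'c \<Rightarrow> 'c) topology" where
  "PP b C = product_topology (TT b C) UNIV"

lemma grp_Sym: "grp p \<subseteq> Sym (col p)"
  using grp_sub unfolding perm_subgroup_def by blast

lemma topspace_PP: "C \<subseteq> grp b \<Longrightarrow> topspace (PP b C) = {\<rho>. good b C \<rho>}"
proof -
  assume Cg: "C \<subseteq> grp b"
  have "topspace (PP b C) = {\<rho>. \<forall>p. \<rho> p \<in> Sym (col p) \<inter> SS b C p}"
    unfolding PP_def TT_def by (simp add: PiE_UNIV_domain Pi_def)
  also have "\<dots> = {\<rho>. good b C \<rho>}"
  proof (intro Collect_cong iffI)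
    fix \<rho> assume a: "\<forall>p. \<rho> p \<in> Sym (col p) \<inter> SS b C p"
    show "good b C \<rho>" unfolding good_def
    proof (intro conjI allI impI)
      show "\<rho> b \<in> C" using a[rule_format, of b] by (simp add: SS_def)
      fix p assume "p \<noteq> b"
      then show "\<rho> p \<in> grp p" "\<rho> p (kap (par b p)) = kap (par b p)"
        using a[rule_format, of p] by (simp_all add: SS_def point_stabiliser_def)
    qed
  next
    fix \<rho> assume g: "good b C \<rho>"
    show "\<forall>p. \<rho> p \<in> Sym (col p) \<inter> SS b C p"
    proof
      fix p show "\<rho> p \<in> Sym (col p) \<inter> SS b C p"
      proof (cases "p = b")
        case True then show ?thesis using g Cg grp_Sym unfolding good_def SS_def by auto
      next
        case False then show ?thesis using g grp_Sym unfolding good_def SS_def point_stabiliser_def by auto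
      qed
    qed
  qed
  finally show ?thesis .
qed

lemma openin_perm_neq: "openin (perm_topology V) {q \<in> Sym V. q x \<noteq> a}"
  unfolding openin_perm_topology
proof (intro conjI ballI)
  fix p assume p: "p \<in> {q \<in> Sym V. q x \<noteq> a}"
  show "\<exists>F. finite F \<and> F \<subseteq> V \<and> {q \<in> Sym V. \<forall>x\<in>F. q x = p x} \<subseteq> {q \<in> Sym V. q x \<noteq> a}"
  proof (cases "x \<in> V")
    case True then show ?thesis using p by (intro exI[of _ "{x}"]) auto
  next
    case False then show ?thesis using p by (intro exI[of _ "{}"]) (auto simp: Sym_fix)
  qed
qed auto

lemma closedin_perm_fix: "closedin (perm_topology V) {q \<in> Sym V. q x = a}"
proof -
  have "topspace (perm_topology V) - {q \<in> Sym V. q x = a} = {q \<in> Sym V. q x \<noteq> a}" by auto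
  then show ?thesis unfolding closedin_def using openin_perm_neq by auto
qed

lemma compact_stab: "x \<in> col p \<Longrightarrow> compactin (perm_topology (col p)) (point_stabiliser (grp p) x)"
proof (cases "p \<in> VX")
  case True
  assume "x \<in> col p"
  then show ?thesis using True Mstab by (simp add: col_def grp_def)
next
  case False
  assume x: "x \<in> col p"
  have "point_stabiliser N x = {q \<in> Sym Y. q x = x} \<inter> N"
    using NG unfolding point_stabiliser_def perm_subgroup_def by auto
  moreover have "compactin (perm_topology Y) ({q \<in> Sym Y. q x = x} \<inter> N)"
    using closed_Int_compactin[OF closedin_perm_fix Ncomp] .
  ultimately show ?thesis using False by (simp add: col_def grp_def)
qed

lemma compact_PP:
  assumes "compactin (perm_topology (col b)) C"
  shows "compact_space (PP b C)"
  unfolding PP_def compact_space_product_topology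
proof (rule disjI2, intro ballI)
  fix p :: 'v
  have "compactin (perm_topology (col p)) (SS b C p)"
  proof (cases "p = b")
    case True then show ?thesis using assms by (simp add: SS_def)
  next
    case False
    have "E p (par b p)" using par[OF False] Esym by blast
    then have "kap (par b p) \<in> col p" by (rule kap_col)
    then show ?thesis using False compact_stab by (simp add: SS_def)
  qed
  then show "compact_space (TT b C p)" unfolding TT_def by (rule compact_space_subtopology)
qed

lemma U_VY: "g \<in> UU \<Longrightarrow> g v \<in> VY \<longleftrightarrow> v \<in> VY"
  using U_side[of g v] notVX by blast

lemma rs_Sym: "g \<in> UU \<Longrightarrow> rs g \<in> Sym VY"
proof -
  assume g: "g \<in> UU"
  have "bij_betw g VY VY"
  proof -
    have "inj g" using U_bij[OF g] bij_is_inj by blast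
    then have "inj_on g VY" by (rule inj_on_subset) simp
    moreover have "g ` VY = VY"
    proof
      show "g ` VY \<subseteq> VY" using U_VY[OF g] by blast
      show "VY \<subseteq> g ` VY"
      proof
        fix y assume y: "y \<in> VY"
        have "surj g" using U_bij[OF g] bij_is_surj by blast
        then obtain x where x: "y = g x" by (metis surjD)
        then have "x \<in> VY" using U_VY[OF g] y by simp
        then show "y \<in> g ` VY" using x by blast
      qed
    qed
    ultimately show ?thesis unfolding bij_betw_def by blast
  qed
  then have "bij_betw (rs g) VY VY"
    by (rule bij_betw_cong[THEN iffD1, rotated]) (simp add: rs_def)
  then have "rs g permutes VY"
    by (rule bij_imp_permutes) (simp add: rs_def)
  then show ?thesis by (simp add: Sym_def)
qed

lemma open_agree:
  assumes fin: "finite D"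
  shows "openin (PP b C) {\<rho>' \<in> topspace (PP b C). \<forall>(p,x)\<in>D. \<rho>' p x = \<rho> p x}"
proof -
  have o: "openin (PP b C) {\<rho>' \<in> topspace (PP b C). \<rho>' p x = a}" for p x a
  proof -
    have "openin (TT b C p) ({q \<in> Sym (col p). q x = a} \<inter> SS b C p)"
      unfolding TT_def by (rule openin_subtopology_Int[OF openin_perm_eval])
    then have "openin (PP b C) {\<rho>' \<in> topspace (PP b C). \<rho>' p \<in> {q \<in> Sym (col p). q x = a} \<inter> SS b C p}"
      unfolding PP_def by (rule openin_continuous_map_preimage[OF continuous_map_product_projection[OF UNIV_I]])
    moreover have "{\<rho>' \<in> topspace (PP b C). \<rho>' p \<in> {q \<in> Sym (col p). q x = a} \<inter> SS b C p}
       = {\<rho>' \<in> topspace (PP b C). \<rho>' p x = a}"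
      unfolding PP_def TT_def by (auto simp: PiE_UNIV_domain Pi_def)
    ultimately show ?thesis by simp
  qed
  have "openin (PP b C) ((\<Inter>d\<in>D. {\<rho>' \<in> topspace (PP b C). \<rho>' (fst d) (snd d) = \<rho> (fst d) (snd d)}) \<inter> topspace (PP b C))"
    by (rule openin_INT[OF fin]) (rule o)
  moreover have "(\<Inter>d\<in>D. {\<rho>' \<in> topspace (PP b C). \<rho>' (fst d) (snd d) = \<rho> (fst d) (snd d)}) \<inter> topspace (PP b C)
     = {\<rho>' \<in> topspace (PP b C). \<forall>(p,x)\<in>D. \<rho>' p x = \<rho> p x}"
    by force
  ultimately show ?thesis by simp
qed

lemma cont_Phi:
  assumes Cg: "C \<subseteq> grp b"
  shows "continuous_map (PP b C) (perm_topology VY) (\<lambda>\<rho>. rs (gc b \<rho>))"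
  unfolding continuous_map_def
proof (intro conjI allI impI)
  show "(\<lambda>\<rho>. rs (gc b \<rho>)) \<in> topspace (PP b C) \<rightarrow> topspace (perm_topology VY)"
    using rs_Sym gc_U[OF Cg] topspace_PP[OF Cg] by auto
  fix W assume W: "openin (perm_topology VY) W"
  show "openin (PP b C) {\<rho> \<in> topspace (PP b C). rs (gc b \<rho>) \<in> W}"
  proof (subst openin_subopen, intro ballI)
    fix \<rho> assume \<rho>: "\<rho> \<in> {\<rho> \<in> topspace (PP b C). rs (gc b \<rho>) \<in> W}"
    then obtain F where F: "finite F" "F \<subseteq> VY" "{q \<in> Sym VY. \<forall>x\<in>F. q x = rs (gc b \<rho>) x} \<subseteq> W"
      using W unfolding openin_perm_topology by blast
    have "\<forall>y\<in>F. \<exists>D. finite D \<and> (\<forall>\<rho>'. (\<forall>(p,x)\<in>D. \<rho>' p x = \<rho> p x) \<longrightarrow> gc b \<rho>' y = gc b \<rho> y)"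
      using gc_dep by blast
    then obtain DD where DD: "\<And>y. y \<in> F \<Longrightarrow> finite (DD y) \<and> (\<forall>\<rho>'. (\<forall>(p,x)\<in>DD y. \<rho>' p x = \<rho> p x) \<longrightarrow> gc b \<rho>' y = gc b \<rho> y)"
      by metis
    define D where "D = (\<Union>y\<in>F. DD y)"
    have fD: "finite D" unfolding D_def using F(1) DD by blast
    define Ob where "Ob = {\<rho>' \<in> topspace (PP b C). \<forall>(p,x)\<in>D. \<rho>' p x = \<rho> p x}"
    have "openin (PP b C) Ob" unfolding Ob_def by (rule open_agree[OF fD])
    moreover have "\<rho> \<in> Ob" using \<rho> unfolding Ob_def by auto
    moreover have "Ob \<subseteq> {\<rho> \<in> topspace (PP b C). rs (gc b \<rho>) \<in> W}"
    proof
      fix \<rho>' assume o: "\<rho>' \<in> Ob"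
      then have t: "\<rho>' \<in> topspace (PP b C)" unfolding Ob_def by blast
      have "\<forall>y\<in>F. gc b \<rho>' y = gc b \<rho> y"
      proof
        fix y assume y: "y \<in> F"
        have "\<forall>(p,x)\<in>DD y. \<rho>' p x = \<rho> p x" using o y unfolding Ob_def D_def by blast
        then show "gc b \<rho>' y = gc b \<rho> y" using DD[OF y] by blast
      qed
      moreover have "rs (gc b \<rho>') \<in> Sym VY" using rs_Sym gc_U[OF Cg] t topspace_PP[OF Cg] by auto
      ultimately have "rs (gc b \<rho>') \<in> W" using F(2,3) unfolding rs_def by auto
      then show "\<rho>' \<in> {\<rho> \<in> topspace (PP b C). rs (gc b \<rho>) \<in> W}" using t by blast
    qed
    ultimately show "\<exists>T. openin (PP b C) T \<and> \<rho> \<in> T \<and> T \<subseteq> {\<rho> \<in> topspace (PP b C). rs (gc b \<rho>) \<in> W}"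
      by blast
  qed
qed

lemma compact_stabset:
  assumes Cg: "C \<subseteq> grp b" and Cc: "compactin (perm_topology (col b)) C"
  shows "compactin (perm_topology VY) (rs ` stabset b C)"
proof -
  have "compactin (PP b C) (topspace (PP b C))" using compact_PP[OF Cc] unfolding compact_space_def .
  from image_compactin[OF this cont_Phi[OF Cg]]
  have "compactin (perm_topology VY) ((\<lambda>\<rho>. rs (gc b \<rho>)) ` {\<rho>. good b C \<rho>})"
    using topspace_PP[OF Cg] by simp
  moreover have "(\<lambda>\<rho>. rs (gc b \<rho>)) ` {\<rho>. good b C \<rho>} = rs ` stabset b C"
    using stabset_eq[OF Cg] by (simp add: image_image)
  ultimately show ?thesis by simp
qed


lemma rs_comp: "g \<in> UU \<Longrightarrow> h \<in> UU \<Longrightarrow> rs (g \<circ> h) = rs g \<circ> rs h"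
  unfolding rs_def using U_VY[of h] by (auto simp: fun_eq_iff)

lemma U_inv_apply: "g \<in> UU \<Longrightarrow> g (inv g x) = x \<and> inv g (g x) = x"
  using U_bij[of g] by (simp add: bij_is_surj surj_f_inv_f bij_is_inj inv_f_f)

lemma rs_id: "rs id = id" unfolding rs_def by (auto simp: fun_eq_iff)

lemma rs_inv: "g \<in> UU \<Longrightarrow> inv (rs g) = rs (inv g)"
proof -
  assume g: "g \<in> UU"
  have 1: "g \<circ> inv g = id" "inv g \<circ> g = id" using U_inv_apply[OF g] by (auto simp: fun_eq_iff)
  have "rs g \<circ> rs (inv g) = id" using rs_comp[OF g U_inv[OF g], symmetric] 1(1) rs_id by simp
  moreover have "rs (inv g) \<circ> rs g = id" using rs_comp[OF U_inv[OF g] g, symmetric] 1(2) rs_id by simp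
  ultimately show ?thesis by (rule inv_unique_comp)
qed

lemma box_eq: "box_product E VX VY c M N = rs ` UU"
  unfolding box_product_def rs_def by simp

lemma B_subgroup: "perm_subgroup VY (rs ` UU)"
  unfolding perm_subgroup_def
proof (intro conjI ballI)
  show "rs ` UU \<subseteq> Sym VY" using rs_Sym by blast
  show "id \<in> rs ` UU" using U_id rs_id by (metis image_eqI)
  fix p q assume "p \<in> rs ` UU" "q \<in> rs ` UU"
  then obtain g h where "g \<in> UU" "h \<in> UU" "p = rs g" "q = rs h" by blast
  then show "p \<circ> q \<in> rs ` UU" using rs_comp U_comp by (metis image_eqI)
next
  fix p assume "p \<in> rs ` UU"
  then obtain g where "g \<in> UU" "p = rs g" by blast
  then show "inv p \<in> rs ` UU" using rs_inv U_inv by (metis image_eqI)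
qed

lemma exists_loc:
  assumes "\<pi> \<in> grp b"
  shows "\<exists>h\<in>UU. h b = b \<and> (\<forall>w. E b w \<longrightarrow> kap (h w) = \<pi> (kap w))"
proof -
  define \<rho> where "\<rho> p = (if p = b then \<pi> else id)" for p
  have Cg: "{\<pi>} \<subseteq> grp b" using assms by simp
  have g: "good b {\<pi>} \<rho>" unfolding good_def \<rho>_def using grp_id by simp
  have "gc b \<rho> \<in> UU" using gc_U[OF Cg g] .
  moreover have "gc b \<rho> b = b" by (rule gc_b)
  moreover have "\<forall>w. E b w \<longrightarrow> kap (gc b \<rho> w) = \<pi> (kap w)"
    using gc_loc_b[OF Cg g] by (simp add: \<rho>_def)
  ultimately show ?thesis by blast
qed

lemma point_stab_eq: "v \<in> VY \<Longrightarrow> point_stabiliser (rs ` UU) v = rs ` stabset v N"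
proof -
  assume v: "v \<in> VY"
  have gv: "grp v = N" using v VXY(1) by (auto simp: grp_def)
  show ?thesis
  proof
    show "point_stabiliser (rs ` UU) v \<subseteq> rs ` stabset v N"
    proof
      fix p assume "p \<in> point_stabiliser (rs ` UU) v"
      then obtain h where h: "h \<in> UU" "p = rs h" "rs h v = v" unfolding point_stabiliser_def by blast
      then have hv: "h v = v" using v by (simp add: rs_def)
      obtain \<sigma> where "\<sigma> \<in> grp v" "\<forall>w. E v w \<longrightarrow> kap (h w) = \<sigma> (kap w)" using U_loc[OF h(1)] by blast
      then have "h \<in> stabset v N" unfolding stabset_def using h(1) hv gv by auto
      then show "p \<in> rs ` stabset v N" using h(2) by blast
    qed
    show "rs ` stabset v N \<subseteq> point_stabiliser (rs ` UU) v"
      unfolding stabset_def point_stabiliser_def using v by (auto simp: rs_def)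
  qed
qed

lemma stab_compact: "v \<in> VY \<Longrightarrow> compactin (perm_topology VY) (point_stabiliser (rs ` UU) v)"
proof -
  assume v: "v \<in> VY"
  have "v \<notin> VX" using v VXY(1) by blast
  then have gv: "grp v = N" "col v = Y" by (auto simp: grp_def col_def)
  show ?thesis using point_stab_eq[OF v] compact_stabset[of N v] gv Ncomp by simp
qed


lemma B_generated:
  assumes CM: "C \<subseteq> M" and Cc: "compactin (perm_topology X) C" and Cgen: "generated_perm_group X C = M"
  shows "compactly_generated VY (rs ` UU)"
proof -
  obtain u where u: "u \<in> VX"
  proof (cases "undefined \<in> VX")
    case True then show ?thesis using that by blast
  next
    case False
    obtain w where "E undefined w" using has_nbr by blast
    then have "w \<notin> VY" using Eside False by blast
    then have "w \<in> VX" using VXY(2) by blast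
    then show ?thesis using that by blast
  qed
  obtain v where uv: "E u v" using has_nbr by blast
  have v: "v \<in> VY" using Eside[OF uv] u by blast
  have vX: "v \<notin> VX" using v VXY(1) by blast
  have gu: "grp u = M" "col u = X" using u by (auto simp: grp_def col_def)
  have gv: "grp v = N" "col v = Y" using vX by (auto simp: grp_def col_def)
  define K1 where "K1 = rs ` stabset u C"
  define K2 where "K2 = rs ` stabset v N"
  define H where "H = generated_perm_group VY (K1 \<union> K2)"
  have K1U: "K1 \<subseteq> rs ` UU" unfolding K1_def stabset_def by blast
  have K2U: "K2 \<subseteq> rs ` UU" unfolding K2_def stabset_def by blast
  have Kc: "compactin (perm_topology VY) (K1 \<union> K2)"
  proof (rule compactin_Un)
    show "compactin (perm_topology VY) K1"
      unfolding K1_def using compact_stabset[of C u] CM Cc gu by simp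
    show "compactin (perm_topology VY) K2"
      unfolding K2_def using compact_stabset[of N v] Ncomp gv by simp
  qed
  have KS: "K1 \<union> K2 \<subseteq> Sym VY" using K1U K2U B_subgroup unfolding perm_subgroup_def by blast
  have HS: "perm_subgroup VY H" unfolding H_def by (rule gen_subgroup[OF KS])
  have H1: "K1 \<subseteq> H" "K2 \<subseteq> H" unfolding H_def using gen_sup by blast+
  have Hc: "p \<in> H \<Longrightarrow> q \<in> H \<Longrightarrow> p \<circ> q \<in> H" for p q using HS unfolding perm_subgroup_def by blast
  have Hi: "p \<in> H \<Longrightarrow> inv p \<in> H" for p using HS unfolding perm_subgroup_def by blast
  have Hid: "id \<in> H" using HS unfolding perm_subgroup_def by blast
  have HB: "H \<subseteq> rs ` UU" unfolding H_def by (rule gen_least[OF B_subgroup]) (use K1U K2U in blast)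
  have fixv: "h \<in> UU \<Longrightarrow> h v = v \<Longrightarrow> rs h \<in> H" for h
  proof -
    assume h: "h \<in> UU" "h v = v"
    obtain \<sigma> where "\<sigma> \<in> grp v" "\<forall>w. E v w \<longrightarrow> kap (h w) = \<sigma> (kap w)" using U_loc[OF h(1)] by blast
    then have "h \<in> stabset v N" unfolding stabset_def using h gv by auto
    then show ?thesis using H1(2) unfolding K2_def by blast
  qed
  define Q where "Q = {\<pi> \<in> M. \<forall>h\<in>UU. h u = u \<and> (\<forall>w. E u w \<longrightarrow> kap (h w) = \<pi> (kap w)) \<longrightarrow> rs h \<in> H}"
  have MX: "\<pi> \<in> M \<Longrightarrow> \<pi> permutes X" for \<pi> using grp_perm[of \<pi> u] gu by simp
  have Qsub: "perm_subgroup X Q"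
    unfolding perm_subgroup_def
  proof (intro conjI ballI)
    show "Q \<subseteq> Sym X" unfolding Q_def using MG unfolding perm_subgroup_def by blast
    show "id \<in> Q" unfolding Q_def
    proof (intro CollectI conjI ballI impI)
      show "id \<in> M" using MG unfolding perm_subgroup_def by blast
      fix h assume h: "h \<in> UU" "h u = u \<and> (\<forall>w. E u w \<longrightarrow> kap (h w) = id (kap w))"
      have "E u (h v)" using U_E[OF h(1), of u v] uv h(2) by simp
      moreover have "kap (h v) = kap v" using h(2) uv by simp
      ultimately have "h v = v" using kap_inj uv by blast
      then show "rs h \<in> H" using fixv h(1) by blast
    qed
  next
    fix \<pi>1 \<pi>2 assume q: "\<pi>1 \<in> Q" "\<pi>2 \<in> Q"
    show "\<pi>1 \<circ> \<pi>2 \<in> Q" unfolding Q_def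
    proof (intro CollectI conjI ballI impI)
      show "\<pi>1 \<circ> \<pi>2 \<in> M" using q MG unfolding Q_def perm_subgroup_def by blast
      fix h assume h: "h \<in> UU" "h u = u \<and> (\<forall>w. E u w \<longrightarrow> kap (h w) = (\<pi>1 \<circ> \<pi>2) (kap w))"
      have p2: "\<pi>2 \<in> grp u" using q gu unfolding Q_def by blast
      obtain h2 where h2: "h2 \<in> UU" "h2 u = u" "\<forall>w. E u w \<longrightarrow> kap (h2 w) = \<pi>2 (kap w)"
        using exists_loc[OF p2] by blast
      have rh2: "rs h2 \<in> H" using q(2) h2 unfolding Q_def by blast
      define h' where "h' = h \<circ> inv h2"
      have h'U: "h' \<in> UU" unfolding h'_def using U_comp[OF h(1) U_inv[OF h2(1)]] .
      have i2: "inv h2 u = u" using U_inv_apply[OF h2(1)] h2(2) by metis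
      have h'u: "h' u = u" unfolding h'_def using i2 h(2) by simp
      have h'l: "\<forall>w. E u w \<longrightarrow> kap (h' w) = \<pi>1 (kap w)"
      proof (intro allI impI)
        fix w assume e: "E u w"
        define w' where "w' = inv h2 w"
        have e': "E u w'" using U_E[OF U_inv[OF h2(1)], of u w] e i2 unfolding w'_def by simp
        have hw: "h2 w' = w" using U_inv_apply[OF h2(1)] unfolding w'_def by simp
        have "kap w = \<pi>2 (kap w')" using h2(3) e' hw by metis
        moreover have "kap (h w') = \<pi>1 (\<pi>2 (kap w'))" using h(2) e' by simp
        moreover have "h' w = h w'" unfolding h'_def w'_def by simp
        ultimately show "kap (h' w) = \<pi>1 (kap w)" by simp
      qed
      have "\<pi>1 \<in> Q" by (rule q(1))
      then have rh': "rs h' \<in> H" using h'U h'u h'l unfolding Q_def by blast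
      have "h = h' \<circ> h2" unfolding h'_def using U_inv_apply[OF h2(1)] by (auto simp: fun_eq_iff)
      then have "rs h = rs h' \<circ> rs h2" using rs_comp[OF h'U h2(1)] by simp
      then show "rs h \<in> H" using Hc[OF rh' rh2] by simp
    qed
  next
    fix \<pi> assume q: "\<pi> \<in> Q"
    show "inv \<pi> \<in> Q" unfolding Q_def
    proof (intro CollectI conjI ballI impI)
      show "inv \<pi> \<in> M" using q MG unfolding Q_def perm_subgroup_def by blast
      fix h assume h: "h \<in> UU" "h u = u \<and> (\<forall>w. E u w \<longrightarrow> kap (h w) = inv \<pi> (kap w))"
      have pM: "\<pi> \<in> M" using q unfolding Q_def by blast
      have hi: "inv h \<in> UU" using U_inv[OF h(1)] .
      have iu: "inv h u = u" using U_inv_apply[OF h(1)] h(2) by metis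
      have il: "\<forall>w. E u w \<longrightarrow> kap (inv h w) = \<pi> (kap w)"
      proof (intro allI impI)
        fix w assume e: "E u w"
        define w' where "w' = inv h w"
        have e': "E u w'" using U_E[OF hi, of u w] e iu unfolding w'_def by simp
        have hw: "h w' = w" using U_inv_apply[OF h(1)] unfolding w'_def by simp
        have "kap w = inv \<pi> (kap w')" using h(2) e' hw by metis
        then have "\<pi> (kap w) = kap w'" using permutes_inverses(1)[OF MX[OF pM]] by simp
        then show "kap (inv h w) = \<pi> (kap w)" unfolding w'_def by simp
      qed
      have "rs (inv h) \<in> H" using q hi iu il unfolding Q_def by blast
      then have "inv (rs (inv h)) \<in> H" by (rule Hi)
      moreover have "inv (rs (inv h)) = rs h"
        using rs_inv[OF hi] inv_inv_eq[OF U_bij[OF h(1)]] by simp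
      ultimately show "rs h \<in> H" by simp
    qed
  qed
  have CQ: "C \<subseteq> Q"
  proof
    fix \<pi> assume p: "\<pi> \<in> C"
    show "\<pi> \<in> Q" unfolding Q_def
    proof (intro CollectI conjI ballI impI)
      show "\<pi> \<in> M" using p CM by blast
      fix h assume h: "h \<in> UU" "h u = u \<and> (\<forall>w. E u w \<longrightarrow> kap (h w) = \<pi> (kap w))"
      then have "h \<in> stabset u C" unfolding stabset_def using p by blast
      then show "rs h \<in> H" using H1(1) unfolding K1_def by blast
    qed
  qed
  have MQ: "M \<subseteq> Q" using gen_least[OF Qsub CQ] Cgen by simp
  have fixu: "h \<in> UU \<Longrightarrow> h u = u \<Longrightarrow> rs h \<in> H" for h
  proof -
    assume h: "h \<in> UU" "h u = u"
    obtain \<sigma> where s: "\<sigma> \<in> grp u" "\<forall>w. E u w \<longrightarrow> kap (h w) = \<sigma> (kap w)" using U_loc[OF h(1)] by blast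
    then have "\<sigma> \<in> Q" using MQ gu by blast
    then show ?thesis using h s unfolding Q_def by blast
  qed
  define R where "R = {w. \<exists>k\<in>UU. rs k \<in> H \<and> (w = k u \<or> w = k v)}"
  have Ru: "u \<in> R"
  proof -
    have "id \<in> UU \<and> rs id \<in> H \<and> (u = id u \<or> u = id v)" using U_id Hid rs_id by simp
    then show ?thesis unfolding R_def by blast
  qed
  have Rstep: "w \<in> R \<Longrightarrow> E w w' \<Longrightarrow> w' \<in> R" for w w'
  proof -
    assume wR: "w \<in> R" and e: "E w w'"
    then obtain k where k: "k \<in> UU" "rs k \<in> H" "w = k u \<or> w = k v" unfolding R_def by blast
    define w'' where "w'' = inv k w'"
    have kw: "k w'' = w'" using U_inv_apply[OF k(1)] unfolding w''_def by simp
    show "w' \<in> R"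
    proof (cases "w = k u")
      case True
      have e2: "E u w''" using U_E[OF k(1), of u w''] e True kw by simp
      have k1: "kap v \<in> col u" using kap_col[OF uv] .
      have k2: "kap w'' \<in> col u" using kap_col[OF e2] .
      obtain \<pi> where \<pi>: "\<pi> \<in> grp u" "\<pi> (kap v) = kap w''" using grp_trans[OF k1 k2] by blast
      obtain a where a: "a \<in> UU" "a u = u" "\<forall>w. E u w \<longrightarrow> kap (a w) = \<pi> (kap w)"
        using exists_loc[OF \<pi>(1)] by blast
      have "E u (a v)" using U_E[OF a(1), of u v] uv a(2) by simp
      moreover have "kap (a v) = kap w''" using a(3) uv \<pi>(2) by simp
      ultimately have av: "a v = w''" using kap_inj[OF _ e2] by blast
      have "rs (k \<circ> a) \<in> H" using rs_comp[OF k(1) a(1)] Hc[OF k(2) fixu[OF a(1,2)]] by simp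
      moreover have "w' = (k \<circ> a) v" using av kw by simp
      ultimately show ?thesis unfolding R_def using U_comp[OF k(1) a(1)] by blast
    next
      case False
      then have wv: "w = k v" using k(3) by blast
      have e2: "E v w''" using U_E[OF k(1), of v w''] e wv kw by simp
      have k1: "kap u \<in> col v" using kap_col[OF Esym[OF uv]] .
      have k2: "kap w'' \<in> col v" using kap_col[OF e2] .
      obtain \<pi> where \<pi>: "\<pi> \<in> grp v" "\<pi> (kap u) = kap w''" using grp_trans[OF k1 k2] by blast
      obtain a where a: "a \<in> UU" "a v = v" "\<forall>w. E v w \<longrightarrow> kap (a w) = \<pi> (kap w)"
        using exists_loc[OF \<pi>(1)] by blast
      have "E v (a u)" using U_E[OF a(1), of v u] Esym[OF uv] a(2) by simp
      moreover have "kap (a u) = kap w''" using a(3) Esym[OF uv] \<pi>(2) by simp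
      ultimately have au: "a u = w''" using kap_inj[OF _ e2] by blast
      have "rs (k \<circ> a) \<in> H" using rs_comp[OF k(1) a(1)] Hc[OF k(2) fixv[OF a(1,2)]] by simp
      moreover have "w' = (k \<circ> a) u" using au kw by simp
      ultimately show ?thesis unfolding R_def using U_comp[OF k(1) a(1)] by blast
    qed
  qed
  have Rall: "w \<in> R" for w
  proof -
    have "E\<^sup>*\<^sup>* u w" by (rule Econn)
    then show ?thesis
    proof (induction rule: rtranclp_induct)
      case base then show ?case by (rule Ru)
    next
      case (step y z) then show ?case using Rstep by blast
    qed
  qed
  have "rs ` UU \<subseteq> H"
  proof
    fix p assume "p \<in> rs ` UU"
    then obtain h where h: "h \<in> UU" "p = rs h" by blast
    obtain k where k: "k \<in> UU" "rs k \<in> H" "h u = k u \<or> h u = k v"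
      using Rall[of "h u"] unfolding R_def by blast
    have "h u \<in> VX" using U_side[OF h(1)] u by simp
    moreover have "k v \<notin> VX" using U_side[OF k(1)] vX by simp
    ultimately have hk: "h u = k u" using k(3) by auto
    define h' where "h' = inv k \<circ> h"
    have h'U: "h' \<in> UU" unfolding h'_def using U_comp[OF U_inv[OF k(1)] h(1)] .
    have "h' u = u" unfolding h'_def using hk U_inv_apply[OF k(1)] by simp
    then have rh': "rs h' \<in> H" using fixu h'U by blast
    have "h = k \<circ> h'" unfolding h'_def using U_inv_apply[OF k(1)] by (auto simp: fun_eq_iff)
    then have "rs h = rs k \<circ> rs h'" using rs_comp[OF k(1) h'U] by simp
    then show "p \<in> H" using Hc[OF k(2) rh'] h(2) by simp
  qed
  then have HH: "generated_perm_group VY (K1 \<union> K2) = rs ` UU" using HB unfolding H_def by blast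
  have KK: "K1 \<union> K2 \<subseteq> rs ` UU" using K1U K2U by blast
  show ?thesis unfolding compactly_generated_def
    by (rule exI[of _ "K1 \<union> K2"]) (intro conjI KK Kc HH)
qed

end

theorem theorem6p3:
  fixes X Y :: "'c set" and M N :: "('c \<Rightarrow> 'c) set"
    and E :: "'v \<Rightarrow> 'v \<Rightarrow> bool" and VX VY :: "'v set" and c :: "'v \<times> 'v \<Rightarrow> 'c"
  assumes "X \<inter> Y = {}"
    and "\<exists>a\<in>X. \<exists>b\<in>X. a \<noteq> b" and "\<exists>a\<in>Y. \<exists>b\<in>Y. a \<noteq> b"
    and "perm_subgroup X M" and "perm_subgroup Y N"
    and "transitive_on X M" and "transitive_on Y N"
    and "biregular_tree E VX VY X Y"
    and "legal_colouring E VX VY X Y c"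
    and "compactly_generated X M"
    and "\<forall>x\<in>X. compactin (perm_topology X) (point_stabiliser M x)"
    and "compactin (perm_topology Y) N"
  shows "compactly_generated VY (box_product E VX VY c M N)
    \<and> (\<forall>v\<in>VY. compactin (perm_topology VY) (point_stabiliser (box_product E VX VY c M N) v))"
proof -
  have Xne: "X \<noteq> {}" using assms(2) by blast
  have Yne: "Y \<noteq> {}" using assms(3) by blast
  interpret bt E VX VY X Y c M N
    by (rule bt.intro) (use Xne Yne assms(4-9,11,12) in simp_all)
  obtain C where C: "C \<subseteq> M" "compactin (perm_topology X) C" "generated_perm_group X C = M"
    using assms(10) unfolding compactly_generated_def by blast
  have 1: "compactly_generated VY (box_product E VX VY c M N)"
    using B_generated[OF C] box_eq by simp
  have 2: "\<forall>v\<in>VY. compactin (perm_topology VY) (point_stabiliser (box_product E VX VY c M N) v)"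
    using stab_compact box_eq by simp
  show ?thesis using 1 2 by blast
qed

end
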